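(* Let $S$ be a finite set, $N\ge1$, $\mathcal X=S^N$, $\mu$ uniform on $\mathcal X$, and let $P$ be a coordinate-replacement kernel $Pf(x)=\frac1N\sum_{i=1}^N\sum_{u\in S}K_i(x_{-i};x_i,u)f(x^{i,u})$, reversible with respect to $\mu$, with a $P$-invariant set $\Omega\subseteq\mathcal X$, $\mu(\Omega)>0$. Let $G\subseteq\Omega$. Suppose there is $\gamma>0$ such that for every coordinate $i$ and every $x_{-i}$ whose $i$-fibre $\{x^{i,u}:u\in S\}$ intersects $G$, the fibre kernel $K_i(x_{-i})$ has spectral gap at least $\gamma$ with respect to the uniform measure on $S$. Then every nonnegative $F:\mathcal X\to\mathbb R$ with $\operatorname{supp}(F)\subseteq G$ satisfies \[ \operatorname{Ent}_\mu(F^2)\le C\frac{N\log|S|}{\gamma}\,\mathcal E_P^\mu(F,F), \] where $C<\infty$ is universal.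
   Context: For $x\in S^N$, $x^{i,u}$ is $x$ with coordinate $i$ replaced by $u$, and $x_{-i}=(x_1,\dots,x_{i-1},x_{i+1},\dots,x_N)$. In a coordinate-replacement kernel each $K_i(x_{-i})$ is a Markov kernel on $S$ reversible w.r.t. the uniform measure on $S$. $\Omega$ invariant means $P(x,y)=0$ for $x\in\Omega,y\notin\Omega$. $\operatorname{Ent}_\rho(f^2)=\rho(f^2\log f^2)-\rho(f^2)\log\rho(f^2)$; $\mathcal E^\rho_K(f,f)=\frac12\sum_{x,y}\rho(x)K(x,y)(f(x)-f(y))^2$. The spectral gap of a reversible kernel $K$ with stationary law $\rho$ is $1/C_P$, where $C_P$ is the smallest constant with $\operatorname{Var}_\rho(f)\le C_P\,\mathcal E^\rho_K(f,f)$ for all real $f$. *)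

theory Defs
  imports "HOL-Analysis.Analysis"
begin

definition config_space :: "nat set \<Rightarrow> nat \<Rightarrow> (nat \<Rightarrow> nat) set" where
  "config_space S N = PiE {..<N} (\<lambda>_. S)"

definition unif_exp :: "'b set \<Rightarrow> ('b \<Rightarrow> real) \<Rightarrow> real" where
  "unif_exp A g = (\<Sum>x\<in>A. g x) / real (card A)"

definition unif_prob :: "'b set \<Rightarrow> 'b set \<Rightarrow> real" where
  "unif_prob A B = real (card (A \<inter> B)) / real (card A)"

text \<open>Ent_rho(f^2) with rho uniform on A (0 log 0 = 0 since ln 0 = 0).\<close>
definition ent_sq :: "'b set \<Rightarrow> ('b \<Rightarrow> real) \<Rightarrow> real" where
  "ent_sq A f = unif_exp A (\<lambda>x. (f x)\<^sup>2 * ln ((f x)\<^sup>2))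
               - unif_exp A (\<lambda>x. (f x)\<^sup>2) * ln (unif_exp A (\<lambda>x. (f x)\<^sup>2))"

definition unif_var :: "'b set \<Rightarrow> ('b \<Rightarrow> real) \<Rightarrow> real" where
  "unif_var A f = unif_exp A (\<lambda>x. (f x)\<^sup>2) - (unif_exp A f)\<^sup>2"

definition dirichlet :: "'b set \<Rightarrow> ('b \<Rightarrow> 'b \<Rightarrow> real) \<Rightarrow> ('b \<Rightarrow> real) \<Rightarrow> real" where
  "dirichlet A K f = (1/2) * (\<Sum>x\<in>A. \<Sum>y\<in>A. (1 / real (card A)) * K x y * (f x - f y)\<^sup>2)"

definition unif_reversible_markov :: "'b set \<Rightarrow> ('b \<Rightarrow> 'b \<Rightarrow> real) \<Rightarrow> bool" where
  "unif_reversible_markov A K \<longleftrightarrow>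
     (\<forall>x\<in>A. \<forall>y\<in>A. K x y \<ge> 0) \<and> (\<forall>x\<in>A. (\<Sum>y\<in>A. K x y) = 1) \<and>
     (\<forall>x\<in>A. \<forall>y\<in>A. (1 / real (card A)) * K x y = (1 / real (card A)) * K y x)"

text \<open>Spectral gap 1/C_P, where C_P is the smallest constant with Var <= C_P * E
  (convention: C_P = 0 gives gap = \<infinity>, no admissible constant gives gap = 0).\<close>
definition spectral_gap :: "'b set \<Rightarrow> ('b \<Rightarrow> 'b \<Rightarrow> real) \<Rightarrow> ereal" where
  "spectral_gap A K = Sup {ereal g | g. g \<ge> 0 \<and>
      (\<forall>f :: 'b \<Rightarrow> real. g * unif_var A f \<le> dirichlet A K f)}"

definition coord_kernel ::
  "nat set \<Rightarrow> nat \<Rightarrow> (nat \<Rightarrow> (nat \<Rightarrow> nat) \<Rightarrow> nat \<Rightarrow> nat \<Rightarrow> real)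
     \<Rightarrow> (nat \<Rightarrow> nat) \<Rightarrow> (nat \<Rightarrow> nat) \<Rightarrow> real" where
  "coord_kernel S N K x y =
     (1 / real N) * (\<Sum>i<N. \<Sum>u\<in>S. (if y = x(i := u) then K i x (x i) u else 0))"

end

theory Submission
  imports Defs
begin


lemma cs_Suc: "config_space S (Suc N) = (\<lambda>(y, g). g(N := y)) ` (S \<times> config_space S N)"
  unfolding config_space_def lessThan_Suc by (simp add: PiE_insert_eq)

lemma cs_inj: "inj_on (\<lambda>(y, g). g(N := y)) (S \<times> config_space S N)"
  unfolding config_space_def using inj_combinator[of N "{..<N}" "\<lambda>_. S"] by simp

lemma cs_finite: "finite S \<Longrightarrow> finite (config_space S N)"
  unfolding config_space_def by (simp add: finite_PiE)

lemma cs_card: "finite S \<Longrightarrow> card (config_space S N) = card S ^ N"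
  unfolding config_space_def by (simp add: card_PiE)

lemma cs_upd: "x \<in> config_space S N \<Longrightarrow> i < N \<Longrightarrow> u \<in> S \<Longrightarrow> x(i := u) \<in> config_space S N"
  unfolding config_space_def by (auto simp: PiE_iff extensional_def)

lemma cs_mem: "x \<in> config_space S N \<Longrightarrow> i < N \<Longrightarrow> x i \<in> S"
  unfolding config_space_def by (auto simp: PiE_iff)

lemma sum_cs_Suc:
  "(\<Sum>x\<in>config_space S (Suc N). h x) = (\<Sum>g\<in>config_space S N. \<Sum>u\<in>S. h (g(N := u)))"
proof -
  have "(\<Sum>x\<in>config_space S (Suc N). h x) = (\<Sum>p\<in>S \<times> config_space S N. h ((\<lambda>(y, g). g(N := y)) p))"
    unfolding cs_Suc by (rule sum.reindex[OF cs_inj, unfolded comp_def])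
  also have "\<dots> = (\<Sum>u\<in>S. \<Sum>g\<in>config_space S N. h (g(N := u)))"
    unfolding sum.cartesian_product by (intro sum.cong) auto
  also have "\<dots> = (\<Sum>g\<in>config_space S N. \<Sum>u\<in>S. h (g(N := u)))"
    by (rule sum.swap)
  finally show ?thesis .
qed

lemma ue_Suc:
  assumes "finite S"
  shows "unif_exp (config_space S (Suc N)) h = unif_exp (config_space S N) (\<lambda>g. unif_exp S (\<lambda>u. h (g(N := u))))"
  unfolding unif_exp_def sum_cs_Suc cs_card[OF assms]
  by (simp add: sum_divide_distrib[symmetric] field_simps)

lemma ue_const: "finite A \<Longrightarrow> A \<noteq> {} \<Longrightarrow> unif_exp A (\<lambda>_. c) = c"
  unfolding unif_exp_def by simp

lemma ue_add: "unif_exp A (\<lambda>x. f x + g x) = unif_exp A f + unif_exp A g"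
  unfolding unif_exp_def by (simp add: sum.distrib add_divide_distrib)

lemma ue_diff: "unif_exp A (\<lambda>x. f x - g x) = unif_exp A f - unif_exp A g"
  unfolding unif_exp_def by (simp add: sum_subtractf diff_divide_distrib)

lemma ue_cmult: "unif_exp A (\<lambda>x. c * f x) = c * unif_exp A f"
  unfolding unif_exp_def by (simp add: sum_distrib_left[symmetric])

lemma ue_multc: "unif_exp A (\<lambda>x. f x * c) = unif_exp A f * c"
  unfolding unif_exp_def by (simp add: sum_distrib_right[symmetric])

lemma ue_sum: "finite I \<Longrightarrow> unif_exp A (\<lambda>x. \<Sum>i\<in>I. f i x) = (\<Sum>i\<in>I. unif_exp A (f i))"
  unfolding unif_exp_def by (simp add: sum.swap[of _ I] sum_divide_distrib)

lemma ue_swap: "unif_exp A (\<lambda>a. unif_exp B (\<lambda>b. h a b)) = unif_exp B (\<lambda>b. unif_exp A (\<lambda>a. h a b))"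
  unfolding unif_exp_def by (simp add: sum_divide_distrib[symmetric] sum.swap[of _ A])

lemma ue_mono: "(\<And>x. x \<in> A \<Longrightarrow> f x \<le> g x) \<Longrightarrow> unif_exp A f \<le> unif_exp A g"
  unfolding unif_exp_def by (intro divide_right_mono sum_mono) auto

lemma ue_cong: "(\<And>x. x \<in> A \<Longrightarrow> f x = g x) \<Longrightarrow> unif_exp A f = unif_exp A g"
  unfolding unif_exp_def by (metis sum.cong)

lemma ue_nonneg: "(\<And>x. x \<in> A \<Longrightarrow> 0 \<le> f x) \<Longrightarrow> 0 \<le> unif_exp A f"
  unfolding unif_exp_def by (intro divide_nonneg_nonneg sum_nonneg) auto

lemma ue_zero_iff:
  assumes "finite A" "\<And>x. x \<in> A \<Longrightarrow> 0 \<le> f x" "unif_exp A f = 0" "x \<in> A"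
  shows "f x = 0"
proof -
  have "card A > 0" using assms by (auto simp: card_gt_0_iff)
  then have "(\<Sum>x\<in>A. f x) = 0" using assms(3) unfolding unif_exp_def by simp
  then show ?thesis using sum_nonneg_eq_0_iff[OF assms(1)] assms by blast
qed



definition ent1 :: "'b set \<Rightarrow> ('b \<Rightarrow> real) \<Rightarrow> real" where
  "ent1 A \<psi> = unif_exp A (\<lambda>x. \<psi> x * ln (\<psi> x)) - unif_exp A \<psi> * ln (unif_exp A \<psi>)"

lemma young_pt:
  fixes p y :: real
  assumes "p > 0" "y > 0"
  shows "p * ln y \<le> p * ln p - p + y"
proof -
  have "ln (y / p) \<le> y / p - 1" using assms by (intro ln_le_minus_one) simp
  then have "p * ln (y / p) \<le> p * (y / p - 1)" using assms by (intro mult_left_mono) auto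
  moreover have "ln (y / p) = ln y - ln p" using assms by (simp add: ln_div)
  moreover have "p * (y / p - 1) = y - p" using assms by (simp add: field_simps)
  ultimately have "p * (ln y - ln p) \<le> y - p" by simp
  then show ?thesis by (simp add: algebra_simps)
qed

lemma ent1_zero: "(\<And>x. x \<in> A \<Longrightarrow> \<psi> x = 0) \<Longrightarrow> ent1 A \<psi> = 0"
proof -
  assume h: "\<And>x. x \<in> A \<Longrightarrow> \<psi> x = 0"
  have z: "unif_exp A (\<lambda>_. 0) = 0" by (simp add: unif_exp_def)
  have "unif_exp A \<psi> = unif_exp A (\<lambda>_. 0)" by (rule ue_cong) (simp add: h)
  moreover have "unif_exp A (\<lambda>x. \<psi> x * ln (\<psi> x)) = unif_exp A (\<lambda>_. 0)" by (rule ue_cong) (simp add: h)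
  ultimately show ?thesis unfolding ent1_def z by simp
qed

lemma gibbs:
  assumes fin: "finite A" and ne: "A \<noteq> {}"
    and psi: "\<And>a. a \<in> A \<Longrightarrow> \<psi> a \<ge> 0" and phi: "\<And>a. a \<in> A \<Longrightarrow> \<phi> a \<ge> 0"
    and M: "unif_exp A \<phi> > 0"
    and z: "\<And>a. a \<in> A \<Longrightarrow> \<phi> a = 0 \<Longrightarrow> \<psi> a = 0"
  shows "unif_exp A (\<lambda>a. \<psi> a * (ln (\<phi> a) - ln (unif_exp A \<phi>))) \<le> ent1 A \<psi>"
proof -
  define m where "m = unif_exp A \<psi>"
  define MM where "MM = unif_exp A \<phi>"
  have m0: "m \<ge> 0" unfolding m_def by (rule ue_nonneg) (rule psi)
  show ?thesis
  proof (cases "m = 0")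
    case True
    then have "\<And>a. a \<in> A \<Longrightarrow> \<psi> a = 0" using ue_zero_iff[OF fin psi] m_def by auto
    then have "unif_exp A (\<lambda>a. \<psi> a * (ln (\<phi> a) - ln (unif_exp A \<phi>))) = unif_exp A (\<lambda>_. 0)"
      by (intro ue_cong) simp
    also have "\<dots> = 0" by (simp add: unif_exp_def)
    finally show ?thesis using ent1_zero \<open>\<And>a. a \<in> A \<Longrightarrow> \<psi> a = 0\<close> by (metis order_refl)
  next
    case False
    then have mp: "m > 0" using m0 by simp
    have MMp: "MM > 0" using M MM_def by simp
    have pt: "\<psi> a * (ln (\<phi> a) - ln MM) + \<psi> a * ln m \<le> \<psi> a * ln (\<psi> a) - \<psi> a + \<phi> a * m / MM"
      if a: "a \<in> A" for a
    proof (cases "\<phi> a = 0")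
      case True then show ?thesis using z[OF a] by simp
    next
      case False
      then have php: "\<phi> a > 0" using phi[OF a] by simp
      show ?thesis
      proof (cases "\<psi> a = 0")
        case True then show ?thesis using php mp MMp by simp
      next
        case False
        then have psp: "\<psi> a > 0" using psi[OF a] by simp
        have "\<psi> a * ln (\<phi> a * m / MM) \<le> \<psi> a * ln (\<psi> a) - \<psi> a + \<phi> a * m / MM"
          using php mp MMp psp by (intro young_pt) auto
        moreover have "ln (\<phi> a * m / MM) = ln (\<phi> a) + ln m - ln MM"
          using php mp MMp by (simp add: ln_div ln_mult)
        moreover have "\<psi> a * (ln (\<phi> a) - ln MM) + \<psi> a * ln m = \<psi> a * (ln (\<phi> a) + ln m - ln MM)"
          by (simp add: algebra_simps)
        ultimately show ?thesis by simp
      qed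
    qed
    have "unif_exp A (\<lambda>a. \<psi> a * (ln (\<phi> a) - ln MM) + \<psi> a * ln m)
        \<le> unif_exp A (\<lambda>a. \<psi> a * ln (\<psi> a) - \<psi> a + \<phi> a * m / MM)"
      by (rule ue_mono) (rule pt)
    also have "\<dots> = unif_exp A (\<lambda>a. \<psi> a * ln (\<psi> a)) - m + MM * m / MM"
      unfolding ue_add ue_diff m_def MM_def
      by (simp add: ue_multc[of A "\<lambda>a. \<phi> a * unif_exp A \<psi>" "1 / unif_exp A \<phi>", simplified] ue_multc)
    also have "\<dots> = unif_exp A (\<lambda>a. \<psi> a * ln (\<psi> a))" using MMp by simp
    finally have "unif_exp A (\<lambda>a. \<psi> a * (ln (\<phi> a) - ln MM)) + m * ln m
        \<le> unif_exp A (\<lambda>a. \<psi> a * ln (\<psi> a))"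
      unfolding ue_add ue_multc m_def by simp
    then show ?thesis unfolding ent1_def m_def MM_def by simp
  qed
qed



lemma convex_ent:
  assumes fA: "finite A" and nA: "A \<noteq> {}" and fB: "finite B" and nB: "B \<noteq> {}"
    and psi: "\<And>a b. a \<in> A \<Longrightarrow> b \<in> B \<Longrightarrow> \<psi> a b \<ge> 0"
  shows "ent1 A (\<lambda>a. unif_exp B (\<psi> a)) \<le> unif_exp B (\<lambda>b. ent1 A (\<lambda>a. \<psi> a b))"
proof -
  define m where "m a = unif_exp B (\<psi> a)" for a
  define M where "M = unif_exp A m"
  have m0: "m a \<ge> 0" if "a \<in> A" for a unfolding m_def by (rule ue_nonneg) (simp add: psi that)
  have M0: "M \<ge> 0" unfolding M_def by (rule ue_nonneg) (rule m0)
  have mz: "\<psi> a b = 0" if "a \<in> A" "b \<in> B" "m a = 0" for a b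
    using ue_zero_iff[OF fB, of "\<psi> a"] psi that unfolding m_def by blast
  show ?thesis
  proof (cases "M = 0")
    case True
    have "m a = 0" if "a \<in> A" for a using ue_zero_iff[OF fA, of m a] m0 True M_def that by auto
    then have z: "\<psi> a b = 0" if "a \<in> A" "b \<in> B" for a b using mz that by blast
    have "ent1 A m = 0" by (rule ent1_zero) (simp add: \<open>\<And>a. a \<in> A \<Longrightarrow> m a = 0\<close>)
    moreover have "unif_exp B (\<lambda>b. ent1 A (\<lambda>a. \<psi> a b)) = unif_exp B (\<lambda>_. 0)"
      by (intro ue_cong ent1_zero) (simp add: z)
    moreover have "unif_exp B (\<lambda>_. 0::real) = 0" by (simp add: unif_exp_def)
    moreover have "(\<lambda>a. unif_exp B (\<psi> a)) = m" by (rule ext) (simp add: m_def)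
    ultimately show ?thesis by simp
  next
    case False
    then have Mp: "M > 0" using M0 by simp
    have "unif_exp B (\<lambda>b. unif_exp A (\<lambda>a. \<psi> a b * (ln (m a) - ln (unif_exp A m))))
        \<le> unif_exp B (\<lambda>b. ent1 A (\<lambda>a. \<psi> a b))"
      by (intro ue_mono gibbs fA nA) (use psi m0 Mp mz M_def in auto)
    moreover have "unif_exp B (\<lambda>b. unif_exp A (\<lambda>a. \<psi> a b * (ln (m a) - ln (unif_exp A m))))
        = unif_exp A (\<lambda>a. m a * (ln (m a) - ln M))"
      unfolding ue_swap[of B] M_def m_def by (simp add: ue_multc)
    moreover have "unif_exp A (\<lambda>a. m a * (ln (m a) - ln M)) = ent1 A m"
      unfolding ent1_def M_def by (simp add: right_diff_distrib ue_diff ue_multc)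
    moreover have "(\<lambda>a. unif_exp B (\<psi> a)) = m" by (rule ext) (simp add: m_def)
    ultimately show ?thesis by simp
  qed
qed

lemma two_factor:
  assumes fA: "finite A" and nA: "A \<noteq> {}" and fB: "finite B" and nB: "B \<noteq> {}"
    and psi: "\<And>a b. a \<in> A \<Longrightarrow> b \<in> B \<Longrightarrow> \<psi> a b \<ge> 0"
  shows "unif_exp A (\<lambda>a. unif_exp B (\<lambda>b. \<psi> a b * ln (\<psi> a b)))
      - unif_exp A (\<lambda>a. unif_exp B (\<psi> a)) * ln (unif_exp A (\<lambda>a. unif_exp B (\<psi> a)))
    \<le> unif_exp B (\<lambda>b. ent1 A (\<lambda>a. \<psi> a b)) + unif_exp A (\<lambda>a. ent1 B (\<psi> a))"
proof -
  have c: "ent1 A (\<lambda>a. unif_exp B (\<psi> a)) \<le> unif_exp B (\<lambda>b. ent1 A (\<lambda>a. \<psi> a b))"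
    by (rule convex_ent[OF assms])
  have "unif_exp A (\<lambda>a. ent1 B (\<psi> a)) = unif_exp A (\<lambda>a. unif_exp B (\<lambda>b. \<psi> a b * ln (\<psi> a b)))
      - unif_exp A (\<lambda>a. unif_exp B (\<psi> a) * ln (unif_exp B (\<psi> a)))"
    unfolding ent1_def ue_diff ..
  then show ?thesis using c unfolding ent1_def by linarith
qed

lemma cs_ne: "S \<noteq> {} \<Longrightarrow> config_space S N \<noteq> {}"
  unfolding config_space_def by (simp add: PiE_eq_empty_iff)

lemma cs_Suc_mem: "g \<in> config_space S N \<Longrightarrow> u \<in> S \<Longrightarrow> g(N := u) \<in> config_space S (Suc N)"
  unfolding cs_Suc by auto

lemma tensor:
  assumes fS: "finite S" and nS: "S \<noteq> {}"
  shows "(\<And>x. x \<in> config_space S N \<Longrightarrow> \<psi> x \<ge> 0) \<Longrightarrow>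
    ent1 (config_space S N) \<psi> \<le> (\<Sum>i<N. unif_exp (config_space S N) (\<lambda>x. ent1 S (\<lambda>u. \<psi> (x(i := u)))))"
proof (induction N arbitrary: \<psi>)
  case 0
  have "config_space S 0 = {\<lambda>_. undefined}" unfolding config_space_def by simp
  then show ?case by (simp add: ent1_def unif_exp_def)
next
  case (Suc N)
  let ?X = "config_space S N"
  let ?Y = "config_space S (Suc N)"
  define \<psi>' where "\<psi>' g u = \<psi> (g(N := u))" for g u
  have fX: "finite ?X" by (rule cs_finite[OF fS])
  have nX: "?X \<noteq> {}" by (rule cs_ne[OF nS])
  have p0: "\<psi>' g u \<ge> 0" if "g \<in> ?X" "u \<in> S" for g u
    unfolding \<psi>'_def using Suc.prems cs_Suc_mem that by blast
  have "ent1 ?Y \<psi> = unif_exp ?X (\<lambda>g. unif_exp S (\<lambda>u. \<psi>' g u * ln (\<psi>' g u)))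
      - unif_exp ?X (\<lambda>g. unif_exp S (\<psi>' g)) * ln (unif_exp ?X (\<lambda>g. unif_exp S (\<psi>' g)))"
    unfolding ent1_def ue_Suc[OF fS] \<psi>'_def ..
  also have "\<dots> \<le> unif_exp S (\<lambda>u. ent1 ?X (\<lambda>g. \<psi>' g u)) + unif_exp ?X (\<lambda>g. ent1 S (\<psi>' g))"
    by (rule two_factor[OF fX nX fS nS p0])
  finally have t1: "ent1 ?Y \<psi> \<le> unif_exp S (\<lambda>u. ent1 ?X (\<lambda>g. \<psi>' g u)) + unif_exp ?X (\<lambda>g. ent1 S (\<psi>' g))" .
  have "unif_exp S (\<lambda>u. ent1 ?X (\<lambda>g. \<psi>' g u))
      \<le> unif_exp S (\<lambda>u. \<Sum>i<N. unif_exp ?X (\<lambda>g. ent1 S (\<lambda>v. \<psi>' (g(i := v)) u)))"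
    by (intro ue_mono Suc.IH) (use p0 in auto)
  also have "\<dots> = (\<Sum>i<N. unif_exp ?Y (\<lambda>x. ent1 S (\<lambda>v. \<psi> (x(i := v)))))"
  proof -
    have "unif_exp S (\<lambda>u. \<Sum>i<N. unif_exp ?X (\<lambda>g. ent1 S (\<lambda>v. \<psi>' (g(i := v)) u)))
        = (\<Sum>i<N. unif_exp S (\<lambda>u. unif_exp ?X (\<lambda>g. ent1 S (\<lambda>v. \<psi>' (g(i := v)) u))))"
      by (rule ue_sum) simp
    also have "\<dots> = (\<Sum>i<N. unif_exp ?Y (\<lambda>x. ent1 S (\<lambda>v. \<psi> (x(i := v)))))"
    proof (rule sum.cong[OF refl])
      fix i assume "i \<in> {..<N}"
      then have "i \<noteq> N" by simp
      then show "unif_exp S (\<lambda>u. unif_exp ?X (\<lambda>g. ent1 S (\<lambda>v. \<psi>' (g(i := v)) u)))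
          = unif_exp ?Y (\<lambda>x. ent1 S (\<lambda>v. \<psi> (x(i := v))))"
        unfolding ue_Suc[OF fS] ue_swap[of S] \<psi>'_def by (simp add: fun_upd_twist)
    qed
    finally show ?thesis .
  qed
  finally have t2: "unif_exp S (\<lambda>u. ent1 ?X (\<lambda>g. \<psi>' g u)) \<le> (\<Sum>i<N. unif_exp ?Y (\<lambda>x. ent1 S (\<lambda>v. \<psi> (x(i := v)))))" .
  have t3: "unif_exp ?X (\<lambda>g. ent1 S (\<psi>' g)) = unif_exp ?Y (\<lambda>x. ent1 S (\<lambda>v. \<psi> (x(N := v))))"
    unfolding ue_Suc[OF fS] \<psi>'_def by (simp add: ue_const[OF fS nS])
  show ?case unfolding sum.lessThan_Suc using t1 t2 t3 by linarith
qed



lemma pt_ineq: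
  fixes t n :: real
  assumes t0: "t \<ge> 0" and tn: "t \<le> n" and n2: "n \<ge> 2"
  shows "t\<^sup>2 * ln (t\<^sup>2) - t\<^sup>2 + 1 \<le> 10 * ln n * (t - 1)\<^sup>2"
proof -
  have "ln 2 \<le> ln n" using n2 by simp
  then have l2: "ln n \<ge> 2/3" using ln2_ge_two_thirds by linarith
  show ?thesis
  proof (cases "t = 0")
    case True then show ?thesis using l2 by simp
  next
    case False
    then have tp: "t > 0" using t0 by simp
    have lt2: "ln (t\<^sup>2) = 2 * ln t" using tp by (simp add: ln_realpow)
    show ?thesis
    proof (cases "t \<le> 2")
      case True
      have "ln t \<le> t - 1" using tp by (rule ln_le_minus_one)
      then have "t\<^sup>2 * ln (t\<^sup>2) \<le> t\<^sup>2 * (2 * (t - 1))" unfolding lt2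
        by (intro mult_left_mono) auto
      moreover have "t\<^sup>2 * (2 * (t - 1)) - t\<^sup>2 + 1 = (t - 1)\<^sup>2 * (2 * t + 1)"
        by (simp add: power2_eq_square algebra_simps)
      moreover have "(t - 1)\<^sup>2 * (2 * t + 1) \<le> (t - 1)\<^sup>2 * 5" using True
        by (intro mult_left_mono) auto
      moreover have "(t - 1)\<^sup>2 * 5 \<le> 10 * ln n * (t - 1)\<^sup>2"
      proof -
        have "5 \<le> 10 * ln n" using l2 by simp
        then have "5 * (t - 1)\<^sup>2 \<le> (10 * ln n) * (t - 1)\<^sup>2" by (intro mult_right_mono) auto
        then show ?thesis by (simp add: mult.commute)
      qed
      ultimately show ?thesis by linarith
    next
      case False
      have "ln t \<le> ln n" using tp tn by simp
      then have "t\<^sup>2 * ln (t\<^sup>2) \<le> t\<^sup>2 * (2 * ln n)" unfolding lt2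
        by (intro mult_left_mono) auto
      moreover have "t\<^sup>2 \<le> 4 * (t - 1)\<^sup>2"
      proof -
        have "(3*t-2)*(t-2) \<ge> 0" using False by (intro mult_nonneg_nonneg) auto
        moreover have "4 * (t - 1)\<^sup>2 - t\<^sup>2 = (3*t-2)*(t-2)" by (simp add: power2_eq_square algebra_simps)
        ultimately show ?thesis by linarith
      qed
      moreover have "ln n \<ge> 0" using l2 by simp
      ultimately have "t\<^sup>2 * ln (t\<^sup>2) \<le> 8 * ln n * (t - 1)\<^sup>2"
      proof -
        assume A: "t\<^sup>2 * ln (t\<^sup>2) \<le> t\<^sup>2 * (2 * ln n)" and B: "t\<^sup>2 \<le> 4 * (t - 1)\<^sup>2" and C: "ln n \<ge> 0"
        have "t\<^sup>2 * (2 * ln n) \<le> 4 * (t - 1)\<^sup>2 * (2 * ln n)" using B C by (intro mult_right_mono) auto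
        also have "\<dots> = 8 * ln n * (t - 1)\<^sup>2" by simp
        finally show ?thesis using A by linarith
      qed
      moreover have "8 * ln n * (t - 1)\<^sup>2 \<le> 10 * ln n * (t - 1)\<^sup>2"
        using \<open>ln n \<ge> 0\<close> by (intro mult_right_mono) auto
      moreover have "- t\<^sup>2 + 1 \<le> 0"
      proof -
        have "2 * 2 \<le> t * t" using False by (intro mult_mono) auto
        then show ?thesis by (simp add: power2_eq_square)
      qed
      ultimately show ?thesis by linarith
    qed
  qed
qed

lemma pt2:
  fixes s a n :: real
  assumes a: "a > 0" and s0: "s \<ge> 0" and sn: "s \<le> n * a" and n2: "n \<ge> 2"
  shows "s\<^sup>2 * ln (s\<^sup>2) - s\<^sup>2 * ln (a\<^sup>2) - s\<^sup>2 + a\<^sup>2 \<le> 10 * ln n * (s - a)\<^sup>2"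
proof -
  define t where "t = s / a"
  have st: "s = t * a" using a unfolding t_def by simp
  have t0: "t \<ge> 0" using a s0 unfolding t_def by simp
  have tn: "t \<le> n" using a sn unfolding t_def by (simp add: divide_le_eq)
  have key: "t\<^sup>2 * ln (t\<^sup>2) - t\<^sup>2 + 1 \<le> 10 * ln n * (t - 1)\<^sup>2" by (rule pt_ineq[OF t0 tn n2])
  have "s\<^sup>2 * ln (s\<^sup>2) - s\<^sup>2 * ln (a\<^sup>2) - s\<^sup>2 + a\<^sup>2 = a\<^sup>2 * (t\<^sup>2 * ln (t\<^sup>2) - t\<^sup>2 + 1)"
  proof (cases "t = 0")
    case True then show ?thesis using st by simp
  next
    case False
    then have "ln (s\<^sup>2) = ln (t\<^sup>2) + ln (a\<^sup>2)" using st a t0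
      by (simp add: power_mult_distrib ln_mult)
    then show ?thesis using st by (simp add: power_mult_distrib algebra_simps)
  qed
  also have "\<dots> \<le> a\<^sup>2 * (10 * ln n * (t - 1)\<^sup>2)" using key by (intro mult_left_mono) auto
  also have "\<dots> = 10 * ln n * (s - a)\<^sup>2" using st by (simp add: power2_eq_square algebra_simps)
  finally show ?thesis .
qed

lemma local_lsi:
  assumes fS: "finite S" and nS: "S \<noteq> {}" and f0: "\<And>u. u \<in> S \<Longrightarrow> f u \<ge> 0"
  shows "ent1 S (\<lambda>u. (f u)\<^sup>2) \<le> 10 * ln (real (card S)) * unif_var S f"
proof -
  define n where "n = card S"
  have n1: "n \<ge> 1" using fS nS unfolding n_def by (simp add: Suc_le_eq card_gt_0_iff)
  define a where "a = unif_exp S f"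
  have a0: "a \<ge> 0" unfolding a_def by (rule ue_nonneg) (rule f0)
  show ?thesis
  proof (cases "n = 1")
    case True
    then obtain c where Sc: "S = {c}" unfolding n_def using card_1_singletonE by blast
    show ?thesis unfolding Sc by (simp add: ent1_def unif_var_def unif_exp_def)
  next
    case False
    then have n2: "real n \<ge> 2" using n1 by simp
    show ?thesis
    proof (cases "a = 0")
      case True
      then have z: "f u = 0" if "u \<in> S" for u using ue_zero_iff[OF fS, of f u] f0 that a_def by auto
      have "ent1 S (\<lambda>u. (f u)\<^sup>2) = 0" by (rule ent1_zero) (simp add: z)
      moreover have "unif_exp S (\<lambda>u. (f u)\<^sup>2) = unif_exp S (\<lambda>_. 0)" by (rule ue_cong) (simp add: z)
      moreover have "unif_exp S (\<lambda>_. 0::real) = 0" by (simp add: unif_exp_def)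
      ultimately have "unif_var S f = 0" "ent1 S (\<lambda>u. (f u)\<^sup>2) = 0"
        using True unfolding unif_var_def a_def by simp_all
      then show ?thesis by simp
    next
      case False
      then have ap: "a > 0" using a0 by simp
      define M where "M = unif_exp S (\<lambda>u. (f u)\<^sup>2)"
      have M0: "M \<ge> 0" unfolding M_def by (rule ue_nonneg) simp
      have Mb: "- M * ln M \<le> - M * ln (a\<^sup>2) - M + a\<^sup>2"
      proof (cases "M = 0")
        case True then show ?thesis by simp
      next
        case False
        then have Mp: "M > 0" using M0 by simp
        have "ln (a\<^sup>2 / M) \<le> a\<^sup>2 / M - 1" using ap Mp by (intro ln_le_minus_one) simp
        then have "M * ln (a\<^sup>2 / M) \<le> M * (a\<^sup>2 / M - 1)" using Mp by (intro mult_left_mono) auto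
        moreover have "ln (a\<^sup>2 / M) = ln (a\<^sup>2) - ln M" using ap Mp by (simp add: ln_div)
        moreover have "M * (a\<^sup>2 / M - 1) = a\<^sup>2 - M" using Mp by (simp add: field_simps)
        ultimately show ?thesis by (simp add: algebra_simps)
      qed
      have fle: "f u \<le> real n * a" if u: "u \<in> S" for u
      proof -
        have "f u \<le> (\<Sum>v\<in>S. f v)" using fS u f0 by (intro member_le_sum) auto
        moreover have "(\<Sum>v\<in>S. f v) = real n * a" using n1 unfolding a_def unif_exp_def n_def by simp
        ultimately show ?thesis by simp
      qed
      have "ent1 S (\<lambda>u. (f u)\<^sup>2) \<le> unif_exp S (\<lambda>u. (f u)\<^sup>2 * ln ((f u)\<^sup>2)) - M * ln (a\<^sup>2) - M + a\<^sup>2"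
        using Mb unfolding ent1_def M_def by simp
      also have "\<dots> = unif_exp S (\<lambda>u. (f u)\<^sup>2 * ln ((f u)\<^sup>2) - (f u)\<^sup>2 * ln (a\<^sup>2) - (f u)\<^sup>2 + a\<^sup>2)"
        unfolding ue_add ue_diff ue_multc ue_const[OF fS nS] M_def ..
      also have "\<dots> \<le> unif_exp S (\<lambda>u. 10 * ln (real n) * (f u - a)\<^sup>2)"
        by (intro ue_mono pt2 ap f0 fle n2)
      also have "\<dots> = 10 * ln (real n) * (M - a\<^sup>2)"
      proof -
        have "unif_exp S (\<lambda>u. (f u - a)\<^sup>2) = unif_exp S (\<lambda>u. (f u)\<^sup>2 - 2 * a * f u + a\<^sup>2)"
          by (simp add: power2_eq_square algebra_simps)
        also have "\<dots> = M - a\<^sup>2" unfolding ue_add ue_diff ue_cmult ue_const[OF fS nS] M_def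
          a_def[symmetric] by (simp add: power2_eq_square)
        finally show ?thesis by (simp add: ue_cmult)
      qed
      finally show ?thesis unfolding unif_var_def M_def a_def n_def .
    qed
  qed
qed



lemma dir_nonneg: "(\<And>a b. a \<in> S \<Longrightarrow> b \<in> S \<Longrightarrow> K a b \<ge> 0) \<Longrightarrow> dirichlet S K f \<ge> 0"
  unfolding dirichlet_def by (intro mult_nonneg_nonneg sum_nonneg) auto

lemma gap_use:
  assumes g: "spectral_gap S K \<ge> ereal \<gamma>" and gp: "\<gamma> > 0"
    and K0: "\<And>a b. a \<in> S \<Longrightarrow> b \<in> S \<Longrightarrow> K a b \<ge> 0"
  shows "\<gamma> * unif_var S f \<le> dirichlet S K f"
proof (cases "unif_var S f \<le> 0")
  case True
  then have "\<gamma> * unif_var S f \<le> 0" using gp by (simp add: mult_nonneg_nonpos)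
  then show ?thesis using dir_nonneg[of S K f, OF K0] by linarith
next
  case False
  then have vp: "unif_var S f > 0" by simp
  have "spectral_gap S K \<le> ereal (dirichlet S K f / unif_var S f)"
    unfolding spectral_gap_def
  proof (rule Sup_least)
    fix e assume "e \<in> {ereal g |g. 0 \<le> g \<and> (\<forall>f. g * unif_var S f \<le> dirichlet S K f)}"
    then obtain g where e: "e = ereal g" and "g * unif_var S f \<le> dirichlet S K f" by blast
    then have "g \<le> dirichlet S K f / unif_var S f" using vp by (simp add: le_divide_eq)
    then show "e \<le> ereal (dirichlet S K f / unif_var S f)" using e by simp
  qed
  then have "ereal \<gamma> \<le> ereal (dirichlet S K f / unif_var S f)" using g by (rule order_trans[rotated])
  then have "\<gamma> \<le> dirichlet S K f / unif_var S f" by simp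
  then show ?thesis using vp by (simp add: le_divide_eq)
qed

lemma swap_fibre:
  assumes i: "i < N"
  shows "(\<Sum>x\<in>config_space S N. \<Sum>a\<in>S. g (x(i := a))) = real (card S) * (\<Sum>x\<in>config_space S N. g x)"
proof -
  let ?X = "config_space S N"
  define \<phi> where "\<phi> p = ((fst p)(i := snd p), fst p i)" for p :: "(nat \<Rightarrow> nat) \<times> nat"
  have bij: "bij_betw \<phi> (?X \<times> S) (?X \<times> S)"
    by (rule bij_betw_byWitness[where f' = \<phi>]) (auto simp: \<phi>_def cs_upd cs_mem i)
  have "(\<Sum>x\<in>?X. \<Sum>a\<in>S. g (x(i := a))) = (\<Sum>p\<in>?X \<times> S. g (fst (\<phi> p)))"
    unfolding sum.cartesian_product \<phi>_def by (intro sum.cong) auto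
  also have "\<dots> = (\<Sum>p\<in>?X \<times> S. g (fst p))"
    by (rule sum.reindex_bij_betw[OF bij, of "\<lambda>p. g (fst p)"])
  also have "\<dots> = (\<Sum>x\<in>?X. \<Sum>a\<in>S. g x)"
    unfolding sum.cartesian_product by (intro sum.cong) auto
  also have "\<dots> = real (card S) * (\<Sum>x\<in>?X. g x)" by (simp add: sum_distrib_left)
  finally show ?thesis .
qed

lemma dir_ident:
  assumes fS: "finite S" and nS: "S \<noteq> {}" and N1: "N \<ge> 1"
    and Kc: "\<forall>i<N. \<forall>x\<in>config_space S N. \<forall>w\<in>S. K i (x(i := w)) = K i x"
  shows "(\<Sum>i<N. unif_exp (config_space S N) (\<lambda>x. dirichlet S (K i x) (\<lambda>u. F (x(i := u)))))
    = real N * dirichlet (config_space S N) (coord_kernel S N K) F"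
proof -
  let ?X = "config_space S N"
  define Q where "Q i x = (\<Sum>u\<in>S. K i x (x i) u * (F x - F (x(i := u)))\<^sup>2)" for i x
  have cS: "real (card S) > 0" using fS nS by (simp add: card_gt_0_iff)
  have s1: "(\<Sum>y\<in>?X. (1 / real (card ?X)) * coord_kernel S N K x y * (F x - F y)\<^sup>2)
      = (1 / real (card ?X)) * (1 / real N) * (\<Sum>i<N. Q i x)" if x: "x \<in> ?X" for x
  proof -
    have "(\<Sum>y\<in>?X. (1 / real (card ?X)) * coord_kernel S N K x y * (F x - F y)\<^sup>2)
      = (1 / real (card ?X)) * (1 / real N) * (\<Sum>y\<in>?X. \<Sum>i<N. \<Sum>u\<in>S.
           (if y = x(i := u) then K i x (x i) u * (F x - F y)\<^sup>2 else 0))"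
      unfolding coord_kernel_def sum_distrib_left sum_distrib_right
      by (intro sum.cong refl) (simp add: sum_distrib_left sum_distrib_right)
    also have "(\<Sum>y\<in>?X. \<Sum>i<N. \<Sum>u\<in>S.
           (if y = x(i := u) then K i x (x i) u * (F x - F y)\<^sup>2 else 0))
        = (\<Sum>i<N. \<Sum>y\<in>?X. \<Sum>u\<in>S.
           (if y = x(i := u) then K i x (x i) u * (F x - F y)\<^sup>2 else 0))"
      by (rule sum.swap)
    also have "\<dots> = (\<Sum>i<N. \<Sum>u\<in>S. \<Sum>y\<in>?X.
           (if y = x(i := u) then K i x (x i) u * (F x - F y)\<^sup>2 else 0))"
      by (intro sum.cong refl sum.swap)
    also have "\<dots> = (\<Sum>i<N. Q i x)"
      unfolding Q_def
    proof (intro sum.cong refl)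
      fix i u assume "i \<in> {..<N}" "u \<in> S"
      then have "x(i := u) \<in> ?X" using cs_upd x by auto
      then show "(\<Sum>y\<in>?X. (if y = x(i := u) then K i x (x i) u * (F x - F y)\<^sup>2 else 0))
          = K i x (x i) u * (F x - F (x(i := u)))\<^sup>2"
        using cs_finite[OF fS, of N] by (simp add: sum.delta'[of ?X])
    qed
    finally show ?thesis .
  qed
  have "dirichlet ?X (coord_kernel S N K) F = (1/2) * (\<Sum>x\<in>?X. (1 / real (card ?X)) * (1 / real N) * (\<Sum>i<N. Q i x))"
    unfolding dirichlet_def by (intro arg_cong[where f="\<lambda>t. (1/2) * t"] sum.cong refl s1)
  also have "\<dots> = (1/2) * (1 / real (card ?X)) * (1 / real N) * (\<Sum>x\<in>?X. \<Sum>i<N. Q i x)"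
    by (simp only: sum_distrib_left[symmetric] mult.assoc)
  finally have dP: "dirichlet ?X (coord_kernel S N K) F = (1/2) * (1 / real (card ?X)) * (1 / real N) * (\<Sum>x\<in>?X. \<Sum>i<N. Q i x)" .
  then have rhs: "real N * dirichlet ?X (coord_kernel S N K) F = (1/2) * (1 / real (card ?X)) * (\<Sum>i<N. \<Sum>x\<in>?X. Q i x)"
  proof -
    have "(\<Sum>x\<in>?X. \<Sum>i<N. Q i x) = (\<Sum>i<N. \<Sum>x\<in>?X. Q i x)" by (rule sum.swap)
    then show ?thesis using N1 dP by simp
  qed
  have s2: "unif_exp ?X (\<lambda>x. dirichlet S (K i x) (\<lambda>u. F (x(i := u)))) = (1/2) * (1 / real (card ?X)) * (\<Sum>x\<in>?X. Q i x)"
    if i: "i < N" for i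
  proof -
    have qa: "Q i (x(i := a)) = (\<Sum>b\<in>S. K i x a b * (F (x(i := a)) - F (x(i := b)))\<^sup>2)"
      if "x \<in> ?X" "a \<in> S" for x a
      unfolding Q_def using Kc i that by simp
    have dx: "dirichlet S (K i x) (\<lambda>u. F (x(i := u))) = (1/2) * (1 / real (card S)) * (\<Sum>a\<in>S. Q i (x(i := a)))"
      if x: "x \<in> ?X" for x
      unfolding dirichlet_def sum_distrib_left
      by (intro sum.cong refl) (simp add: qa[OF x] sum_distrib_left mult_ac)
    have "unif_exp ?X (\<lambda>x. dirichlet S (K i x) (\<lambda>u. F (x(i := u))))
        = (\<Sum>x\<in>?X. (1/2) * (1 / real (card S)) * (\<Sum>a\<in>S. Q i (x(i := a)))) / real (card ?X)"
      unfolding unif_exp_def by (intro arg_cong[where f="\<lambda>t. t / real (card ?X)"] sum.cong refl dx)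
    also have "\<dots> = (1/2) * (1 / real (card S)) * (\<Sum>x\<in>?X. \<Sum>a\<in>S. Q i (x(i := a))) / real (card ?X)"
      by (simp only: sum_distrib_left[symmetric])
    also have "\<dots> = (1/2) * (1 / real (card ?X)) * (\<Sum>x\<in>?X. Q i x)"
      unfolding swap_fibre[OF i] using cS by simp
    finally show ?thesis .
  qed
  have "(\<Sum>i<N. unif_exp ?X (\<lambda>x. dirichlet S (K i x) (\<lambda>u. F (x(i := u)))))
      = (\<Sum>i<N. (1/2) * (1 / real (card ?X)) * (\<Sum>x\<in>?X. Q i x))"
    by (intro sum.cong refl) (simp add: s2)
  also have "\<dots> = real N * dirichlet ?X (coord_kernel S N K) F"
    unfolding rhs by (simp add: sum_distrib_left)
  finally show ?thesis .
qed



lemma main: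
  assumes fS: "finite S" and N1: "N \<ge> 1"
    and Kc: "\<forall>i<N. \<forall>x\<in>config_space S N. \<forall>w\<in>S. K i (x(i := w)) = K i x"
    and Km: "\<forall>i<N. \<forall>x\<in>config_space S N. unif_reversible_markov S (K i x)"
    and pos: "unif_prob (config_space S N) \<Omega> > 0"
    and gp: "\<gamma> > 0"
    and gap: "\<forall>i<N. \<forall>x\<in>config_space S N. (\<exists>u\<in>S. x(i := u) \<in> G) \<longrightarrow>
          spectral_gap S (K i x) \<ge> ereal \<gamma>"
    and F0: "\<forall>x\<in>config_space S N. F x \<ge> 0"
    and FG: "\<forall>x\<in>config_space S N. F x \<noteq> 0 \<longrightarrow> x \<in> G"
  shows "ent_sq (config_space S N) F
        \<le> 10 * (real N * ln (real (card S)) / \<gamma>)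
             * dirichlet (config_space S N) (coord_kernel S N K) F"
proof -
  let ?X = "config_space S N"
  define c where "c = 10 * ln (real (card S)) / \<gamma>"
  have "card ?X \<noteq> 0"
  proof
    assume "card ?X = 0"
    then show False using pos unfolding unif_prob_def by simp
  qed
  then have "?X \<noteq> {}" by auto
  then obtain x0 where "x0 \<in> ?X" by auto
  then have "x0 0 \<in> S" using cs_mem N1 by auto
  then have nS: "S \<noteq> {}" by auto
  have lnn: "ln (real (card S)) \<ge> 0" using fS nS by (simp add: card_gt_0_iff Suc_le_eq)
  have c0: "c \<ge> 0" unfolding c_def using lnn gp by simp
  have fib: "ent1 S (\<lambda>u. (F (x(i := u)))\<^sup>2) \<le> c * dirichlet S (K i x) (\<lambda>u. F (x(i := u)))"
    if i: "i < N" and x: "x \<in> ?X" for i x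
  proof -
    have K0: "\<And>a b. a \<in> S \<Longrightarrow> b \<in> S \<Longrightarrow> K i x a b \<ge> 0"
      using Km i x unfolding unif_reversible_markov_def by blast
    have f0: "\<And>u. u \<in> S \<Longrightarrow> F (x(i := u)) \<ge> 0" using F0 cs_upd[OF x i] by blast
    have d0: "dirichlet S (K i x) (\<lambda>u. F (x(i := u))) \<ge> 0" by (rule dir_nonneg) (rule K0)
    show ?thesis
    proof (cases "\<exists>u\<in>S. x(i := u) \<in> G")
      case True
      then have "spectral_gap S (K i x) \<ge> ereal \<gamma>" using gap i x by blast
      then have g: "\<gamma> * unif_var S (\<lambda>u. F (x(i := u))) \<le> dirichlet S (K i x) (\<lambda>u. F (x(i := u)))"
        by (rule gap_use[OF _ gp K0])
      have l: "ent1 S (\<lambda>u. (F (x(i := u)))\<^sup>2) \<le> 10 * ln (real (card S)) * unif_var S (\<lambda>u. F (x(i := u)))"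
        by (rule local_lsi[OF fS nS f0])
      have "unif_var S (\<lambda>u. F (x(i := u))) \<le> dirichlet S (K i x) (\<lambda>u. F (x(i := u))) / \<gamma>"
        using g gp by (simp add: le_divide_eq mult.commute)
      then have "10 * ln (real (card S)) * unif_var S (\<lambda>u. F (x(i := u)))
          \<le> 10 * ln (real (card S)) * (dirichlet S (K i x) (\<lambda>u. F (x(i := u))) / \<gamma>)"
        using lnn by (intro mult_left_mono) auto
      then show ?thesis using l unfolding c_def by simp
    next
      case False
      then have "\<And>u. u \<in> S \<Longrightarrow> F (x(i := u)) = 0" using FG cs_upd[OF x i] by blast
      then have "ent1 S (\<lambda>u. (F (x(i := u)))\<^sup>2) = 0" by (intro ent1_zero) simp
      then show ?thesis using c0 d0 by simp
    qed
  qed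
  have "ent_sq ?X F = ent1 ?X (\<lambda>x. (F x)\<^sup>2)" unfolding ent_sq_def ent1_def ..
  also have "\<dots> \<le> (\<Sum>i<N. unif_exp ?X (\<lambda>x. ent1 S (\<lambda>u. (F (x(i := u)))\<^sup>2)))"
    by (rule tensor[OF fS nS]) simp
  also have "\<dots> \<le> (\<Sum>i<N. unif_exp ?X (\<lambda>x. c * dirichlet S (K i x) (\<lambda>u. F (x(i := u)))))"
    by (intro sum_mono ue_mono fib) auto
  also have "\<dots> = c * (\<Sum>i<N. unif_exp ?X (\<lambda>x. dirichlet S (K i x) (\<lambda>u. F (x(i := u)))))"
    by (simp add: ue_cmult sum_distrib_left)
  also have "\<dots> = c * (real N * dirichlet ?X (coord_kernel S N K) F)"
    using dir_ident[OF fS nS N1 Kc] by simp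
  also have "\<dots> = 10 * (real N * ln (real (card S)) / \<gamma>) * dirichlet ?X (coord_kernel S N K) F"
    unfolding c_def by simp
  finally show ?thesis .
qed


theorem proposition2p2:
  shows "\<exists>C :: real. \<forall>(S :: nat set) (N :: nat)
      (K :: nat \<Rightarrow> (nat \<Rightarrow> nat) \<Rightarrow> nat \<Rightarrow> nat \<Rightarrow> real)
      (\<Omega> :: (nat \<Rightarrow> nat) set) (G :: (nat \<Rightarrow> nat) set) (\<gamma> :: real)
      (F :: (nat \<Rightarrow> nat) \<Rightarrow> real).
    finite S \<and> N \<ge> 1
    \<comment> \<open>K i x depends on x only through x_{-i}\<close>
    \<and> (\<forall>i<N. \<forall>x\<in>config_space S N. \<forall>w\<in>S. K i (x(i := w)) = K i x)
    \<comment> \<open>each K_i(x_{-i}) is a Markov kernel on S reversible w.r.t. uniform measure\<close>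
    \<and> (\<forall>i<N. \<forall>x\<in>config_space S N. unif_reversible_markov S (K i x))
    \<comment> \<open>P reversible w.r.t. mu (uniform on S^N)\<close>
    \<and> (\<forall>x\<in>config_space S N. \<forall>y\<in>config_space S N.
          (1 / real (card (config_space S N))) * coord_kernel S N K x y
        = (1 / real (card (config_space S N))) * coord_kernel S N K y x)
    \<comment> \<open>Omega invariant with positive mass\<close>
    \<and> \<Omega> \<subseteq> config_space S N
    \<and> (\<forall>x\<in>\<Omega>. \<forall>y\<in>config_space S N - \<Omega>. coord_kernel S N K x y = 0)
    \<and> unif_prob (config_space S N) \<Omega> > 0
    \<and> G \<subseteq> \<Omega>
    \<and> \<gamma> > 0
    \<and> (\<forall>i<N. \<forall>x\<in>config_space S N. (\<exists>u\<in>S. x(i := u) \<in> G) \<longrightarrow>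
          spectral_gap S (K i x) \<ge> ereal \<gamma>)
    \<and> (\<forall>x\<in>config_space S N. F x \<ge> 0)
    \<and> (\<forall>x\<in>config_space S N. F x \<noteq> 0 \<longrightarrow> x \<in> G)
    \<longrightarrow> ent_sq (config_space S N) F
        \<le> C * (real N * ln (real (card S)) / \<gamma>)
             * dirichlet (config_space S N) (coord_kernel S N K) F"
  proof (intro exI[of _ "10::real"] allI impI)
  fix S :: "nat set" and N :: nat and K :: "nat \<Rightarrow> (nat \<Rightarrow> nat) \<Rightarrow> nat \<Rightarrow> nat \<Rightarrow> real"
    and \<Omega> G :: "(nat \<Rightarrow> nat) set" and \<gamma> :: real and F :: "(nat \<Rightarrow> nat) \<Rightarrow> real"
  assume h: "finite S \<and> N \<ge> 1
    \<and> (\<forall>i<N. \<forall>x\<in>config_space S N. \<forall>w\<in>S. K i (x(i := w)) = K i x)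
    \<and> (\<forall>i<N. \<forall>x\<in>config_space S N. unif_reversible_markov S (K i x))
    \<and> (\<forall>x\<in>config_space S N. \<forall>y\<in>config_space S N.
          (1 / real (card (config_space S N))) * coord_kernel S N K x y
        = (1 / real (card (config_space S N))) * coord_kernel S N K y x)
    \<and> \<Omega> \<subseteq> config_space S N
    \<and> (\<forall>x\<in>\<Omega>. \<forall>y\<in>config_space S N - \<Omega>. coord_kernel S N K x y = 0)
    \<and> unif_prob (config_space S N) \<Omega> > 0
    \<and> G \<subseteq> \<Omega>
    \<and> \<gamma> > 0
    \<and> (\<forall>i<N. \<forall>x\<in>config_space S N. (\<exists>u\<in>S. x(i := u) \<in> G) \<longrightarrow>
          spectral_gap S (K i x) \<ge> ereal \<gamma>)
    \<and> (\<forall>x\<in>config_space S N. F x \<ge> 0)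
    \<and> (\<forall>x\<in>config_space S N. F x \<noteq> 0 \<longrightarrow> x \<in> G)"
  show "ent_sq (config_space S N) F
        \<le> 10 * (real N * ln (real (card S)) / \<gamma>)
             * dirichlet (config_space S N) (coord_kernel S N K) F"
    using h by (elim conjE) (rule main, assumption+)
qed

end
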